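(* Let $\Gamma\subset(\mathbb{RP}^1)^m$ be a realisable real EPBQ-curve, and let $a_{jl},b_{jl},e_{jl}$ be the coefficients of its defining relations. Then for any $j\ne l$, $$(1-a_{jl}e_{jl}-b_{jl}b_{lj})^2-4a_{jl}b_{jl}b_{lj}e_{jl}>0.$$
   Context: A real EPBQ-curve is an irreducible real algebraic curve $\Gamma\subset(\mathbb{RP}^1)^m$ (coordinates $z_1,\dots,z_m$) such that (i) for each $j\ne l$, $a_{jl}z_j^2z_l^2+b_{jl}z_j^2-2z_jz_l+b_{lj}z_l^2+e_{jl}=0$ on $\Gamma$ with real coefficients; (ii) no $z_j$ is identically $0$ or $\infty$ on $\Gamma$; (iii) for $j\ne l$, $z_j,z_l$ are neither directly nor inversely proportional on $\Gamma$. The coefficients are uniquely determined, with $a_{jl}=a_{lj}$, $e_{jl}=e_{lj}$. $\Gamma$ is realisable if there exist $n\ge3$, a decomposition $[n]=I_1\sqcup\dots\sqcup I_m$ into nonempty sets ($p\in I_{j(p)}$), nonzero reals $\lambda_1,\dots,\lambda_n$ with $\lambda_p\ne\pm\lambda_q$ whenever $p\ne q$, $j(p)=j(q)$, and reals $g_{pq}=g_{qp}$ for $p\ne q$, $j(p)=j(q)$, such that the matrices $G=(g_{pq})$, $H=(h_{pq})$ defined by $g_{pp}=h_{pp}=1$; $h_{pq}=\frac{2\lambda_p(\lambda_pg_{pq}-\lambda_q)}{\lambda_p^2-\lambda_q^2}$ if $p\ne q$, $j(p)=j(q)$; and, if $j(p)\ne j(q)$, $g_{pq}=\frac12\left(-\frac{a_{j(p)j(q)}}{\lambda_p\lambda_q}+\frac{\lambda_qb_{j(p)j(q)}}{\lambda_p}+\frac{\lambda_pb_{j(q)j(p)}}{\lambda_q}-\lambda_p\lambda_qe_{j(p)j(q)}\right)$,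 $h_{pq}=\frac{\lambda_pb_{j(q)j(p)}}{\lambda_q}-\lambda_p\lambda_qe_{j(p)j(q)}$, satisfy one of: (S) $G$ positive definite; (E) $G$ degenerate positive semidefinite with all principal minors of sizes $2,\dots,n-1$ strictly positive and no row of $H$ a linear combination of rows of $G$; (L) $G$ non-degenerate with negative index of inertia $1$, all principal minors of sizes $2,\dots,n-1$ strictly positive, and $\sum_{q,r}g^{qr}h_{pq}h_{pr}<0$ for all $p$, where $(g^{qr})=G^{-1}$. *)

theory Defs
  imports "Jordan_Normal_Form.Char_Poly" "Jordan_Normal_Form.DL_Submatrix"
begin

text \<open>A point of RP^1 is encoded as an element of real option: Some z is the
  affine point z, None is the point at infinity.  A point of (RP^1)^m is a map
  nat => real option whose coordinates z_0, ..., z_(m-1) are the values at 0..m-1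
  (the values at indices >= m are normalised to None).\<close>

type_synonym rp1 = "real option"

definition rp_space :: "nat \<Rightarrow> (nat \<Rightarrow> rp1) set" where
  "rp_space m = {P. \<forall>j. m \<le> j \<longrightarrow> P j = None}"

text \<open>Homogeneous coordinates (x : y) of a point of RP^1, with z = x / y.\<close>

definition hx :: "rp1 \<Rightarrow> real" where
  "hx z = (case z of None \<Rightarrow> 1 | Some t \<Rightarrow> t)"

definition hy :: "rp1 \<Rightarrow> real" where
  "hy z = (case z of None \<Rightarrow> 0 | Some t \<Rightarrow> 1)"

text \<open>Real polynomials in the homogeneous coordinates x_j, y_j (j < m): a finitely
  supported coefficient function on exponent pairs (alpha, beta).\<close>

type_synonym hpoly = "((nat \<Rightarrow> nat) \<times> (nat \<Rightarrow> nat)) \<Rightarrow> real"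

definition multihomogeneous :: "nat \<Rightarrow> hpoly \<Rightarrow> bool" where
  "multihomogeneous m f \<longleftrightarrow> finite {k. f k \<noteq> 0} \<and>
     (\<exists>d :: nat \<Rightarrow> nat. \<forall>al be. f (al, be) \<noteq> 0 \<longrightarrow>
        (\<forall>j<m. al j + be j = d j) \<and> (\<forall>j. m \<le> j \<longrightarrow> al j = 0 \<and> be j = 0))"

definition hpoly_eval :: "nat \<Rightarrow> hpoly \<Rightarrow> (nat \<Rightarrow> rp1) \<Rightarrow> real" where
  "hpoly_eval m f P = (\<Sum>k\<in>{k. f k \<noteq> 0}. f k *
      (\<Prod>j<m. hx (P j) ^ (fst k j) * hy (P j) ^ (snd k j)))"

definition zariski_closed :: "nat \<Rightarrow> (nat \<Rightarrow> rp1) set \<Rightarrow> bool" where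
  "zariski_closed m S \<longleftrightarrow> (\<exists>F. (\<forall>f\<in>F. multihomogeneous m f) \<and>
      S = {P \<in> rp_space m. \<forall>f\<in>F. hpoly_eval m f P = 0})"

definition zariski_irreducible :: "nat \<Rightarrow> (nat \<Rightarrow> rp1) set \<Rightarrow> bool" where
  "zariski_irreducible m S \<longleftrightarrow> S \<noteq> {} \<and>
     (\<forall>A B. zariski_closed m A \<longrightarrow> zariski_closed m B \<longrightarrow> S = A \<union> B \<longrightarrow> S = A \<or> S = B)"

text \<open>An irreducible real algebraic curve: an irreducible Zariski closed set of
  (Krull) dimension 1, i.e. the longest chains of irreducible closed subsets
  have length exactly 1.\<close>

definition irreducible_real_curve :: "nat \<Rightarrow> (nat \<Rightarrow> rp1) set \<Rightarrow> bool" where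
  "irreducible_real_curve m \<Gamma> \<longleftrightarrow> zariski_closed m \<Gamma> \<and> zariski_irreducible m \<Gamma> \<and>
     (\<exists>Z0. zariski_closed m Z0 \<and> zariski_irreducible m Z0 \<and> Z0 \<subset> \<Gamma>) \<and>
     \<not> (\<exists>Z0 Z1. zariski_closed m Z0 \<and> zariski_irreducible m Z0 \<and>
                 zariski_closed m Z1 \<and> zariski_irreducible m Z1 \<and> Z0 \<subset> Z1 \<and> Z1 \<subset> \<Gamma>)"

text \<open>The relation a z_j^2 z_l^2 + b_jl z_j^2 - 2 z_j z_l + b_lj z_l^2 + e = 0,
  homogenised in (x_j : y_j), (x_l : y_l) (bidegree (2,2)).\<close>

definition biquad_rel :: "real \<Rightarrow> real \<Rightarrow> real \<Rightarrow> real \<Rightarrow> rp1 \<Rightarrow> rp1 \<Rightarrow> bool" where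
  "biquad_rel a bjl blj e zj zl \<longleftrightarrow>
     a * hx zj ^ 2 * hx zl ^ 2 + bjl * hx zj ^ 2 * hy zl ^ 2
     - 2 * hx zj * hy zj * hx zl * hy zl + blj * hy zj ^ 2 * hx zl ^ 2
     + e * hy zj ^ 2 * hy zl ^ 2 = 0"

text \<open>Real EPBQ-curve Gamma with coefficients a, b, e (indices j, l < m).
  Since the coefficients are uniquely determined by Gamma, these are
  "the coefficients of its defining relations".\<close>

definition real_EPBQ_curve :: "nat \<Rightarrow> (nat \<Rightarrow> rp1) set \<Rightarrow>
    (nat \<Rightarrow> nat \<Rightarrow> real) \<Rightarrow> (nat \<Rightarrow> nat \<Rightarrow> real) \<Rightarrow> (nat \<Rightarrow> nat \<Rightarrow> real) \<Rightarrow> bool" where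
  "real_EPBQ_curve m \<Gamma> a b e \<longleftrightarrow>
     irreducible_real_curve m \<Gamma> \<and>
     (\<forall>j<m. \<forall>l<m. j \<noteq> l \<longrightarrow>
        (\<forall>P\<in>\<Gamma>. biquad_rel (a j l) (b j l) (b l j) (e j l) (P j) (P l))) \<and>
     (\<forall>j<m. \<not> (\<forall>P\<in>\<Gamma>. P j = Some 0) \<and> \<not> (\<forall>P\<in>\<Gamma>. P j = None)) \<and>
     (\<forall>j<m. \<forall>l<m. j \<noteq> l \<longrightarrow>
        \<not> (\<exists>c::real. c \<noteq> 0 \<and> (\<forall>P\<in>\<Gamma>. hx (P j) * hy (P l) = c * hy (P j) * hx (P l))) \<and>
        \<not> (\<exists>c::real. c \<noteq> 0 \<and> (\<forall>P\<in>\<Gamma>. hx (P j) * hx (P l) = c * hy (P j) * hy (P l))))"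

definition positive_definite_mat :: "nat \<Rightarrow> real mat \<Rightarrow> bool" where
  "positive_definite_mat n G \<longleftrightarrow>
     (\<forall>x \<in> carrier_vec n. x \<noteq> 0\<^sub>v n \<longrightarrow> x \<bullet> (G *\<^sub>v x) > 0)"

definition positive_semidefinite_mat :: "nat \<Rightarrow> real mat \<Rightarrow> bool" where
  "positive_semidefinite_mat n G \<longleftrightarrow> (\<forall>x \<in> carrier_vec n. x \<bullet> (G *\<^sub>v x) \<ge> 0)"

definition neg_inertia_index :: "real mat \<Rightarrow> nat" where
  "neg_inertia_index G =
     (\<Sum>x\<in>{x::real. x < 0 \<and> poly (char_poly G) x = 0}. order x (char_poly G))"

definition principal_minors_pos :: "nat \<Rightarrow> real mat \<Rightarrow> bool" where
  "principal_minors_pos n G \<longleftrightarrow>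
     (\<forall>I. I \<subseteq> {0..<n} \<longrightarrow> 2 \<le> card I \<longrightarrow> card I \<le> n - 1 \<longrightarrow> det (submatrix G I I) > 0)"

definition Gmat :: "nat \<Rightarrow> (nat \<Rightarrow> nat) \<Rightarrow> (nat \<Rightarrow> real) \<Rightarrow> (nat \<Rightarrow> nat \<Rightarrow> real) \<Rightarrow>
    (nat \<Rightarrow> nat \<Rightarrow> real) \<Rightarrow> (nat \<Rightarrow> nat \<Rightarrow> real) \<Rightarrow> (nat \<Rightarrow> nat \<Rightarrow> real) \<Rightarrow> real mat" where
  "Gmat n J lam g a b e = mat n n (\<lambda>(p, q).
     if p = q then 1
     else if J p = J q then g p q
     else (1/2) * (- a (J p) (J q) / (lam p * lam q) + lam q * b (J p) (J q) / lam p
                   + lam p * b (J q) (J p) / lam q - lam p * lam q * e (J p) (J q)))"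

definition Hmat :: "nat \<Rightarrow> (nat \<Rightarrow> nat) \<Rightarrow> (nat \<Rightarrow> real) \<Rightarrow> (nat \<Rightarrow> nat \<Rightarrow> real) \<Rightarrow>
    (nat \<Rightarrow> nat \<Rightarrow> real) \<Rightarrow> (nat \<Rightarrow> nat \<Rightarrow> real) \<Rightarrow> real mat" where
  "Hmat n J lam g b e = mat n n (\<lambda>(p, q).
     if p = q then 1
     else if J p = J q then 2 * lam p * (lam p * g p q - lam q) / (lam p ^ 2 - lam q ^ 2)
     else lam p * b (J q) (J p) / lam q - lam p * lam q * e (J p) (J q))"

definition condition_S :: "nat \<Rightarrow> real mat \<Rightarrow> real mat \<Rightarrow> bool" where
  "condition_S n G H \<longleftrightarrow> positive_definite_mat n G"

definition condition_E :: "nat \<Rightarrow> real mat \<Rightarrow> real mat \<Rightarrow> bool" where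
  "condition_E n G H \<longleftrightarrow> positive_semidefinite_mat n G \<and> det G = 0 \<and>
     principal_minors_pos n G \<and>
     \<not> (\<exists>p<n. \<exists>c :: nat \<Rightarrow> real. \<forall>q<n. H $$ (p, q) = (\<Sum>r<n. c r * G $$ (r, q)))"

definition condition_L :: "nat \<Rightarrow> real mat \<Rightarrow> real mat \<Rightarrow> bool" where
  "condition_L n G H \<longleftrightarrow> det G \<noteq> 0 \<and> neg_inertia_index G = 1 \<and>
     principal_minors_pos n G \<and>
     (\<forall>Gi \<in> carrier_mat n n. G * Gi = 1\<^sub>m n \<longrightarrow>
        (\<forall>p<n. (\<Sum>q<n. \<Sum>r<n. Gi $$ (q, r) * H $$ (p, q) * H $$ (p, r)) < 0))"

text \<open>Indices: [n] = {0..<n}, coordinates j = 0..<m; J p is j(p).\<close>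

definition realisable :: "nat \<Rightarrow> (nat \<Rightarrow> nat \<Rightarrow> real) \<Rightarrow> (nat \<Rightarrow> nat \<Rightarrow> real) \<Rightarrow>
    (nat \<Rightarrow> nat \<Rightarrow> real) \<Rightarrow> bool" where
  "realisable m a b e \<longleftrightarrow>
     (\<exists>n J lam g. 3 \<le> n \<and>
        (\<forall>p<n. J p < m) \<and> (\<forall>j<m. \<exists>p<n. J p = j) \<and>
        (\<forall>p<n. lam p \<noteq> 0) \<and>
        (\<forall>p<n. \<forall>q<n. p \<noteq> q \<and> J p = J q \<longrightarrow> lam p \<noteq> lam q \<and> lam p \<noteq> - lam q) \<and>
        (\<forall>p<n. \<forall>q<n. p \<noteq> q \<and> J p = J q \<longrightarrow> g p q = g q p) \<and>
        (let G = Gmat n J lam g a b e; H = Hmat n J lam g b e in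
           condition_S n G H \<or> condition_E n G H \<or> condition_L n G H))"

end

theory Submission
  imports Defs
begin

lemma quad_nonpos:
  fixes \<alpha> \<beta> \<gamma> V0 V :: real
  assumes "\<beta>^2 - 4*\<alpha>*\<gamma> \<le> 0" "\<alpha>*V0^2+\<beta>*V0+\<gamma> < 0"
  shows "\<alpha>*V^2+\<beta>*V+\<gamma> \<le> 0"
proof -
  have key: "\<And>W. 4*\<alpha>*(\<alpha>*W^2+\<beta>*W+\<gamma>) = (2*\<alpha>*W+\<beta>)^2 - (\<beta>^2 - 4*\<alpha>*\<gamma>)"
    by (simp add: algebra_simps power2_eq_square)
  have nn: "\<And>W. \<alpha>*(\<alpha>*W^2+\<beta>*W+\<gamma>) \<ge> 0"
  proof -
    fix W have "(2*\<alpha>*W+\<beta>)^2 \<ge> 0" by simp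
    then show "\<alpha>*(\<alpha>*W^2+\<beta>*W+\<gamma>) \<ge> 0" using key[of W] assms(1) by linarith
  qed
  have "\<alpha> \<le> 0"
  proof (rule ccontr)
    assume "\<not> \<alpha> \<le> 0"
    then have "\<alpha> * (\<alpha>*V0^2+\<beta>*V0+\<gamma>) < 0" using assms(2) by (simp add: mult_pos_neg)
    then show False using nn[of V0] by linarith
  qed
  show ?thesis
  proof (cases "\<alpha> = 0")
    case True
    then have "\<beta>^2 \<le> 0" using assms(1) by simp
    then have "\<beta>^2 = 0" using zero_le_power2[of \<beta>] by linarith
    then have "\<beta> = 0" by simp
    then show ?thesis using True assms(2) by simp
  next
    case False
    then have "\<alpha> < 0" using \<open>\<alpha> \<le> 0\<close> by simp
    then show ?thesis using nn[of V] by (simp add: mult_le_0_iff zero_le_mult_iff)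
  qed
qed

lemma core_finite:
  fixes A B B' E x y :: real
  assumes D: "(1 - A*E - B*B')^2 - 4*A*B*B'*E \<le> 0" and x: "x \<noteq> 0" and y: "y \<noteq> 0"
    and ineq: "\<bar>-A + B*y^2 + B'*x^2 - E*x^2*y^2\<bar> < 2*\<bar>x*y\<bar>"
  shows "finite {wv. \<exists>zv. biquad_rel A B B' E zv wv}"
proof -
  define X where "X = x^2"
  define Y where "Y = y^2"
  have X: "X > 0" and Y: "Y > 0" using x y by (simp_all add: X_def Y_def)
  define P where "P = -A + B*y^2 + B'*x^2 - E*x^2*y^2"
  have "\<bar>P\<bar>^2 < (2*\<bar>x*y\<bar>)^2"
    by (rule power_strict_mono) (use ineq P_def in auto)
  then have P2: "P^2 < 4*X*Y" by (simp add: X_def Y_def power_mult_distrib)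
  define al where "al = B' - E*Y"
  define be where "be = B*Y - A"
  have Pe: "P = al*X + be" by (simp add: P_def al_def be_def X_def Y_def algebra_simps)
  have "(al*X - be)^2 \<ge> 0" by simp
  then have "4*al*be*X \<le> P^2" unfolding Pe by (simp add: power2_eq_square algebra_simps)
  then have "4*(al*be)*X < 4*Y*X" using P2 by (simp add: algebra_simps)
  then have "al*be < Y" using X by simp
  then have q: "E*B*Y^2 + (1-A*E-B*B')*Y + A*B' > 0"
    unfolding al_def be_def by (simp add: algebra_simps power2_eq_square)
  define f where "f = (\<lambda>V::real. (-A*B')*V^2 + (1-A*E-B*B')*V + (-B*E))"
  have "f (-1/Y) = - (E*B*Y^2 + (1-A*E-B*B')*Y + A*B') / Y^2"
    unfolding f_def using Y by (simp add: field_simps power2_eq_square)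
  moreover have "- (E*B*Y^2 + (1-A*E-B*B')*Y + A*B') / Y^2 < 0"
    by (rule divide_neg_pos) (use q Y in auto)
  ultimately have f0: "f (-1/Y) < 0" by simp
  have fle: "\<And>V. f V \<le> 0"
    unfolding f_def
    by (rule quad_nonpos[of _ _ _ "-1/Y"]) (use D f0 f_def in \<open>auto simp: algebra_simps power2_eq_square\<close>)
  define p1 where "p1 = [:B, 0, A:]"
  define p2 where "p2 = [:-B*E, 0, 1-A*E-B*B', 0, -A*B':]"
  have ev1: "\<And>w. poly p1 w = A*w^2 + B" unfolding p1_def by (simp add: algebra_simps power2_eq_square)
  have ev2: "\<And>w. poly p2 w = f (w^2)" unfolding p2_def f_def by (simp add: algebra_simps power2_eq_square power4_eq_xxxx)
  have p1nz: "p1 \<noteq> 0"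
  proof
    assume "p1 = 0"
    then have "A = 0" "B = 0" unfolding p1_def by auto
    then show False using D by simp
  qed
  have p2nz: "p2 \<noteq> 0"
  proof
    assume "p2 = 0"
    then have "coeff p2 0 = 0" "coeff p2 2 = 0" "coeff p2 4 = 0" by simp_all
    then have h: "-B*E = 0" "1-A*E-B*B' = 0" "-A*B' = 0"
      unfolding p2_def by (simp_all add: eval_nat_numeral)
    have "f (-1/Y) = 0" unfolding f_def h by simp
    then show False using f0 by simp
  qed
  have sub: "{wv. \<exists>zv. biquad_rel A B B' E zv wv} \<subseteq>
     insert None (Some ` ({w. poly p1 w = 0} \<union> {w. poly p2 w = 0}))"
  proof
    fix wv assume "wv \<in> {wv. \<exists>zv. biquad_rel A B B' E zv wv}"
    then obtain zv where R: "biquad_rel A B B' E zv wv" by blast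
    show "wv \<in> insert None (Some ` ({w. poly p1 w = 0} \<union> {w. poly p2 w = 0}))"
    proof (cases wv)
      case None then show ?thesis by simp
    next
      case (Some w)
      show ?thesis
      proof (cases zv)
        case None
        with R Some have "A*w^2 + B = 0" by (simp add: biquad_rel_def hx_def hy_def)
        then show ?thesis using Some ev1 by auto
      next
        case (Some z)
        with R \<open>wv = Some w\<close> have r: "A*z^2*w^2 + B*z^2 - 2*z*w + B'*w^2 + E = 0"
          by (simp add: biquad_rel_def hx_def hy_def)
        show ?thesis
        proof (cases "A*w^2 + B = 0")
          case True then show ?thesis using \<open>wv = Some w\<close> ev1 by auto
        next
          case False
          define c where "c = A*w^2+B"
          have "(c*z - w)^2 = f (w^2)"
          proof -
            have "c*(c*z^2 - 2*w*z + (B'*w^2+E)) = 0" using r unfolding c_def by (simp add: algebra_simps)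
            then show ?thesis unfolding c_def f_def by (simp add: algebra_simps power2_eq_square power4_eq_xxxx)
          qed
          then have "f (w^2) \<ge> 0" by (metis zero_le_power2)
          then have "f (w^2) = 0" using fle[of "w^2"] by simp
          then show ?thesis using \<open>wv = Some w\<close> ev2 by auto
        qed
      qed
    qed
  qed
  show ?thesis
    by (rule finite_subset[OF sub]) (use p1nz p2nz poly_roots_finite in auto)
qed


definition dl :: "nat \<Rightarrow> nat \<Rightarrow> nat \<Rightarrow> nat \<Rightarrow> nat \<Rightarrow> nat" where
  "dl j l i k t = (if t = j then i else if t = l then k else 0)"
definition monop :: "(nat\<Rightarrow>nat) \<Rightarrow> (nat\<Rightarrow>nat) \<Rightarrow> real \<Rightarrow> hpoly" where
  "monop al be c k = (if k = (al,be) then c else 0)"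
definition mon :: "nat \<Rightarrow> (nat\<Rightarrow>rp1) \<Rightarrow> ((nat\<Rightarrow>nat)\<times>(nat\<Rightarrow>nat)) \<Rightarrow> real" where
  "mon m P k = (\<Prod>j<m. hx (P j) ^ (fst k j) * hy (P j) ^ (snd k j))"

lemma eval_superset:
  assumes "finite S" "{k. f k \<noteq> 0} \<subseteq> S"
  shows "hpoly_eval m f P = (\<Sum>k\<in>S. f k * mon m P k)"
  unfolding hpoly_eval_def mon_def
  by (rule sum.mono_neutral_left) (use assms in auto)

lemma eval_sum:
  assumes I: "finite I" and fin: "\<forall>i\<in>I. finite {k. f i k \<noteq> 0}"
  shows "hpoly_eval m (\<lambda>k. \<Sum>i\<in>I. f i k) P = (\<Sum>i\<in>I. hpoly_eval m (f i) P)"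
proof -
  define S where "S = (\<Union>i\<in>I. {k. f i k \<noteq> 0})"
  have S: "finite S" using I fin unfolding S_def by auto
  have sub: "{k. (\<Sum>i\<in>I. f i k) \<noteq> 0} \<subseteq> S"
  proof
    fix k assume "k \<in> {k. (\<Sum>i\<in>I. f i k) \<noteq> 0}"
    then have ne: "(\<Sum>i\<in>I. f i k) \<noteq> 0" by simp
    have "\<exists>i\<in>I. f i k \<noteq> 0"
    proof (rule ccontr)
      assume "\<not> (\<exists>i\<in>I. f i k \<noteq> 0)"
      then have "(\<Sum>i\<in>I. f i k) = 0" by simp
      then show False using ne by simp
    qed
    then show "k \<in> S" unfolding S_def by auto
  qed
  have "hpoly_eval m (\<lambda>k. \<Sum>i\<in>I. f i k) P = (\<Sum>k\<in>S. (\<Sum>i\<in>I. f i k) * mon m P k)"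
    by (rule eval_superset[OF S sub])
  also have "\<dots> = (\<Sum>k\<in>S. \<Sum>i\<in>I. f i k * mon m P k)" by (simp add: sum_distrib_right)
  also have "\<dots> = (\<Sum>i\<in>I. \<Sum>k\<in>S. f i k * mon m P k)" by (rule sum.swap)
  also have "\<dots> = (\<Sum>i\<in>I. hpoly_eval m (f i) P)"
    by (rule sum.cong[OF refl], rule eval_superset[symmetric]) (use S in \<open>auto simp: S_def\<close>)
  finally show ?thesis .
qed

lemma eval_add:
  assumes "finite {k. f k \<noteq> 0}" "finite {k. g k \<noteq> 0}"
  shows "hpoly_eval m (\<lambda>k. f k + g k) P = hpoly_eval m f P + hpoly_eval m g P"
proof -
  define S where "S = {k. f k \<noteq> 0} \<union> {k. g k \<noteq> 0}"
  have S: "finite S" using assms S_def by auto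
  have "hpoly_eval m (\<lambda>k. f k + g k) P = (\<Sum>k\<in>S. (f k + g k) * mon m P k)"
    by (rule eval_superset[OF S]) (auto simp: S_def)
  also have "\<dots> = (\<Sum>k\<in>S. f k * mon m P k) + (\<Sum>k\<in>S. g k * mon m P k)"
    by (simp add: distrib_right sum.distrib)
  also have "\<dots> = hpoly_eval m f P + hpoly_eval m g P"
    by (subst (1 2) eval_superset[OF S]) (auto simp: S_def)
  finally show ?thesis .
qed

lemma fin_monop: "finite {k. monop al be c k \<noteq> 0}"
proof -
  have "{k. monop al be c k \<noteq> 0} \<subseteq> {(al,be)}" by (auto simp: monop_def split: if_splits)
  then show ?thesis using finite_subset by blast
qed

lemma eval_monop: "hpoly_eval m (monop al be c) P = c * mon m P (al,be)"
  by (subst eval_superset[of "{(al,be)}"]) (auto simp: monop_def)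

lemma mon_dl:
  assumes "j < m" "l < m" "j \<noteq> l"
  shows "mon m P (dl j l i1 k1, dl j l i2 k2) =
    hx (P j) ^ i1 * hy (P j) ^ i2 * (hx (P l) ^ k1 * hy (P l) ^ k2)"
proof -
  have eq: "{..<m} = insert j (insert l ({..<m} - {j,l}))" using assms by auto
  have rest: "(\<Prod>t\<in>{..<m} - {j,l}. hx (P t) ^ dl j l i1 k1 t * hy (P t) ^ dl j l i2 k2 t) = 1"
    by (rule prod.neutral) (auto simp: dl_def)
  show ?thesis unfolding mon_def fst_conv snd_conv
    by (subst eq, subst prod.insert, simp, use assms in simp, subst prod.insert, simp, simp,
        simp only: rest) (use assms in \<open>simp add: dl_def\<close>)
qed

definition mh :: "nat \<Rightarrow> (nat\<Rightarrow>nat) \<Rightarrow> hpoly \<Rightarrow> bool" where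
  "mh m d f \<longleftrightarrow> finite {k. f k \<noteq> 0} \<and> (\<forall>al be. f (al,be) \<noteq> 0 \<longrightarrow>
     (\<forall>j<m. al j + be j = d j) \<and> (\<forall>j. m \<le> j \<longrightarrow> al j = 0 \<and> be j = 0))"

lemma mh_mh: "mh m d f \<Longrightarrow> multihomogeneous m f"
  unfolding mh_def multihomogeneous_def by blast

lemma mh_monop:
  assumes "\<forall>j<m. al j + be j = d j" "\<forall>j. m \<le> j \<longrightarrow> al j = 0 \<and> be j = 0"
  shows "mh m d (monop al be c)"
  unfolding mh_def using assms fin_monop by (auto simp: monop_def split: if_splits)

lemma mh_sum:
  assumes I: "finite I" and h: "\<forall>i\<in>I. mh m d (f i)"
  shows "mh m d (\<lambda>k. \<Sum>i\<in>I. f i k)"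
proof -
  have sub: "{k. (\<Sum>i\<in>I. f i k) \<noteq> 0} \<subseteq> (\<Union>i\<in>I. {k. f i k \<noteq> 0})"
  proof
    fix k assume "k \<in> {k. (\<Sum>i\<in>I. f i k) \<noteq> 0}"
    then have ne: "(\<Sum>i\<in>I. f i k) \<noteq> 0" by simp
    have "\<exists>i\<in>I. f i k \<noteq> 0"
    proof (rule ccontr)
      assume "\<not> (\<exists>i\<in>I. f i k \<noteq> 0)"
      then have "(\<Sum>i\<in>I. f i k) = 0" by simp
      then show False using ne by simp
    qed
    then show "k \<in> (\<Union>i\<in>I. {k. f i k \<noteq> 0})" by auto
  qed
  have fin: "finite (\<Union>i\<in>I. {k. f i k \<noteq> 0})" using I h unfolding mh_def by auto
  show ?thesis unfolding mh_def
  proof (rule conjI)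
    show "finite {k. (\<Sum>i\<in>I. f i k) \<noteq> 0}" using finite_subset[OF sub fin] .
  next
    show "\<forall>al be. (\<Sum>i\<in>I. f i (al, be)) \<noteq> 0 \<longrightarrow> (\<forall>j<m. al j + be j = d j) \<and> (\<forall>j. m \<le> j \<longrightarrow> al j = 0 \<and> be j = 0)"
    proof (intro allI impI)
    fix al be assume "(\<Sum>i\<in>I. f i (al, be)) \<noteq> 0"
    then obtain i where "i \<in> I" "f i (al,be) \<noteq> 0" by (metis (mono_tags, lifting) sum.neutral)
    then show "(\<forall>j<m. al j + be j = d j) \<and> (\<forall>j. m \<le> j \<longrightarrow> al j = 0 \<and> be j = 0)"
      using h unfolding mh_def by blast
  qed
  qed
qed

lemma mh_add:
  assumes "mh m d f" "mh m d g"
  shows "mh m d (\<lambda>k. f k + g k)"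
proof -
  have "mh m d (\<lambda>k. \<Sum>i\<in>{True,False}. (if i then f else g) k)"
    by (rule mh_sum) (use assms in auto)
  then show ?thesis by simp
qed

lemma mh_dl:
  assumes "j < m" "l < m" "j \<noteq> l"
  shows "mh m (dl j l (i1+i2) (k1+k2)) (monop (dl j l i1 k1) (dl j l i2 k2) c)"
  by (rule mh_monop) (use assms in \<open>auto simp: dl_def\<close>)

lemma closed_inter:
  assumes "zariski_closed m \<Gamma>" "multihomogeneous m f"
  shows "zariski_closed m (\<Gamma> \<inter> {P. hpoly_eval m f P = 0})"
proof -
  obtain F where F: "\<forall>f\<in>F. multihomogeneous m f" "\<Gamma> = {P \<in> rp_space m. \<forall>f\<in>F. hpoly_eval m f P = 0}"
    using assms(1) unfolding zariski_closed_def by blast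
  show ?thesis unfolding zariski_closed_def
    by (rule exI[of _ "insert f F"]) (use F assms(2) in auto)
qed

lemma irr_split:
  assumes "zariski_closed m \<Gamma>" "zariski_irreducible m \<Gamma>"
    "multihomogeneous m f" "multihomogeneous m g"
    "\<forall>P\<in>\<Gamma>. hpoly_eval m f P = 0 \<or> hpoly_eval m g P = 0"
  shows "(\<forall>P\<in>\<Gamma>. hpoly_eval m f P = 0) \<or> (\<forall>P\<in>\<Gamma>. hpoly_eval m g P = 0)"
proof -
  let ?A = "\<Gamma> \<inter> {P. hpoly_eval m f P = 0}"
  let ?B = "\<Gamma> \<inter> {P. hpoly_eval m g P = 0}"
  have "zariski_closed m ?A" "zariski_closed m ?B" using closed_inter assms by auto
  moreover have "\<Gamma> = ?A \<union> ?B" using assms(5) by auto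
  ultimately have "\<Gamma> = ?A \<or> \<Gamma> = ?B" using assms(2) unfolding zariski_irreducible_def by blast
  then show ?thesis by blast
qed

definition Tset :: "rp1 set \<Rightarrow> real set" where "Tset W = {t. Some t \<in> W}"
definition pW :: "rp1 set \<Rightarrow> real poly" where "pW W = (\<Prod>t\<in>Tset W. [:-t, 1:])"
definition kW :: "rp1 set \<Rightarrow> nat" where "kW W = card (Tset W) + (if None \<in> W then 1 else 0)"
definition wpoly :: "nat \<Rightarrow> nat \<Rightarrow> rp1 set \<Rightarrow> hpoly" where
  "wpoly j l W kk = (\<Sum>i\<in>{..kW W}. monop (dl j l i 0) (dl j l (kW W - i) 0) (coeff (pW W) i) kk)"

lemma mh_wpoly:
  assumes "j < m" "l < m" "j \<noteq> l"
  shows "mh m (dl j l (kW W) 0) (wpoly j l W)"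
  unfolding wpoly_def
proof (rule mh_sum[rule_format], simp)
  fix i assume "i \<in> {..kW W}"
  then have "i + (kW W - i) = kW W" by simp
  then show "mh m (dl j l (kW W) 0) (monop (dl j l i 0) (dl j l (kW W - i) 0) (coeff (pW W) i))"
    using mh_dl[OF assms, of i "kW W - i" 0 0] by simp
qed

lemma wpoly_eval:
  assumes "j < m" "l < m" "j \<noteq> l"
  shows "hpoly_eval m (wpoly j l W) P =
    (\<Sum>i\<le>kW W. coeff (pW W) i * (hx (P j) ^ i * hy (P j) ^ (kW W - i)))"
  unfolding wpoly_def
  by (subst eval_sum) (auto simp: fin_monop eval_monop mon_dl[OF assms])

lemma wpoly_zero:
  assumes "j < m" "l < m" "j \<noteq> l" "finite W"
  shows "hpoly_eval m (wpoly j l W) P = 0 \<longleftrightarrow> P j \<in> W"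
proof -
  have finT: "finite (Tset W)"
  proof -
    have "Tset W \<subseteq> the ` W" unfolding Tset_def by force
    then show ?thesis using assms(4) finite_subset by blast
  qed
  have nz: "\<forall>t\<in>Tset W. [:-t, 1:] \<noteq> 0" by simp
  have deg: "degree (pW W) = card (Tset W)"
    unfolding pW_def by (subst degree_prod_eq_sum_degree[OF nz]) simp
  have lc: "lead_coeff (pW W) = 1"
    unfolding pW_def lead_coeff_prod by simp
  have degk: "degree (pW W) \<le> kW W" unfolding kW_def deg by simp
  show ?thesis
  proof (cases "P j")
    case None
    have "hpoly_eval m (wpoly j l W) P = (\<Sum>i\<le>kW W. if i = kW W then coeff (pW W) i else 0)"
      unfolding wpoly_eval[OF assms(1-3)] None
      by (rule sum.cong) (auto simp: hx_def hy_def)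
    also have "\<dots> = coeff (pW W) (kW W)" by simp
    finally have e: "hpoly_eval m (wpoly j l W) P = coeff (pW W) (kW W)" .
    show ?thesis
    proof (cases "None \<in> W")
      case True
      then have "kW W > degree (pW W)" unfolding kW_def deg by simp
      then show ?thesis using e True None by (simp add: coeff_eq_0)
    next
      case False
      then have "kW W = degree (pW W)" unfolding kW_def deg by simp
      then show ?thesis using e False None lc by simp
    qed
  next
    case (Some s)
    have "hpoly_eval m (wpoly j l W) P = (\<Sum>i\<le>kW W. coeff (pW W) i * s ^ i)"
      unfolding wpoly_eval[OF assms(1-3)] Some by (simp add: hx_def hy_def)
    also have "\<dots> = poly (pW W) s"
    proof -
      have "poly (pW W) s = poly (\<Sum>i\<le>kW W. monom (coeff (pW W) i) i) s"
        using poly_as_sum_of_monoms'[OF degk] by simp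
      also have "\<dots> = (\<Sum>i\<le>kW W. coeff (pW W) i * s ^ i)" by (simp add: poly_sum poly_monom)
      finally show ?thesis by simp
    qed
    also have "\<dots> = (\<Prod>t\<in>Tset W. s - t)" unfolding pW_def poly_prod by simp
    finally have e: "hpoly_eval m (wpoly j l W) P = (\<Prod>t\<in>Tset W. s - t)" .
    show ?thesis unfolding e Some using finT by (simp add: Tset_def)
  qed
qed

definition ipoly :: "nat \<Rightarrow> nat \<Rightarrow> real \<Rightarrow> hpoly" where
  "ipoly j l c kk = monop (dl j l 1 1) (dl j l 0 0) 1 kk + monop (dl j l 0 0) (dl j l 1 1) (-c) kk"

lemma mh_ipoly:
  assumes "j < m" "l < m" "j \<noteq> l"
  shows "mh m (dl j l 1 1) (ipoly j l c)"
proof -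
  have h1: "mh m (dl j l 1 1) (monop (dl j l 1 1) (dl j l 0 0) 1)" using mh_dl[OF assms, of 1 0 1 0 1] by simp
  have h2: "mh m (dl j l 1 1) (monop (dl j l 0 0) (dl j l 1 1) (-c))" using mh_dl[OF assms, of 0 1 0 1 "-c"] by simp
  show ?thesis unfolding ipoly_def using mh_add[OF h1 h2] .
qed

lemma ipoly_eval:
  assumes "j < m" "l < m" "j \<noteq> l"
  shows "hpoly_eval m (ipoly j l c) P = hx (P j) * hx (P l) - c * hy (P j) * hy (P l)"
  unfolding ipoly_def
  by (subst eval_add) (auto simp: fin_monop eval_monop mon_dl[OF assms])

lemma const_coord:
  assumes "zariski_closed m \<Gamma>" "zariski_irreducible m \<Gamma>" "j < m" "l < m" "j \<noteq> l"
    "finite V" "\<forall>P\<in>\<Gamma>. P j \<in> V"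
  shows "\<exists>v. \<forall>P\<in>\<Gamma>. P j = v"
  using assms(6,7)
proof (induction V rule: finite_induct)
  case empty then show ?case by auto
next
  case (insert v V)
  have "(\<forall>P\<in>\<Gamma>. hpoly_eval m (wpoly j l {v}) P = 0) \<or> (\<forall>P\<in>\<Gamma>. hpoly_eval m (wpoly j l V) P = 0)"
    by (rule irr_split[OF assms(1,2) mh_mh[OF mh_wpoly] mh_mh[OF mh_wpoly]])
       (use assms(3-5) insert wpoly_zero in auto)
  then show ?case
  proof
    assume "\<forall>P\<in>\<Gamma>. hpoly_eval m (wpoly j l {v}) P = 0"
    then show ?thesis using wpoly_zero[OF assms(3-5)] by auto
  next
    assume "\<forall>P\<in>\<Gamma>. hpoly_eval m (wpoly j l V) P = 0"
    then show ?thesis using wpoly_zero[OF assms(3-5)] insert by auto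
  qed
qed



lemma det2: assumes "(A::real mat) \<in> carrier_mat 2 2"
  shows "det A = A$$(0,0)*A$$(1,1) - A$$(0,1)*A$$(1,0)"
proof -
  have "det A = (\<Sum>i<2. A $$ (i,0) * cofactor A i 0)" by (rule laplace_expansion_column[OF assms], simp)
  also have "\<dots> = A$$(0,0) * cofactor A 0 0 + A$$(1,0)*cofactor A 1 0" by (simp add: numeral_2_eq_2)
  also have "cofactor A 0 0 = A$$(1,1)" unfolding cofactor_def using assms
    by (subst det_single[of _], auto simp: mat_delete_def)
  also have "cofactor A 1 0 = - A$$(0,1)" unfolding cofactor_def using assms
    by (subst det_single[of _], auto simp: mat_delete_def)
  finally show ?thesis by simp
qed

lemma minor2:
  assumes G: "(G::real mat) \<in> carrier_mat n n" and pq: "p < q" "q < n"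
  shows "det (submatrix G {p,q} {p,q}) = G$$(p,p)*G$$(q,q) - G$$(p,q)*G$$(q,p)"
proof -
  let ?M = "submatrix G {p,q} {p,q}"
  have c: "{i. i < dim_row G \<and> i \<in> {p,q}} = {p,q}" "{i. i < dim_col G \<and> i \<in> {p,q}} = {p,q}"
    using pq G by auto
  have c2: "card {p,q} = 2" using pq by simp
  have M: "?M \<in> carrier_mat 2 2" unfolding carrier_mat_def mem_Collect_eq dim_submatrix c c2 by simp
  have cp: "card {a\<in>{p,q}. a < p} = 0" using pq by auto
  have cq: "card {a\<in>{p,q}. a < q} = 1"
  proof -
    have "{a\<in>{p,q}. a < q} = {p}" using pq by auto
    then show ?thesis by simp
  qed
  have dG: "p < dim_row G" "q < dim_row G" "p < dim_col G" "q < dim_col G" using G pq by auto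
  have e1: "?M $$ (0,0) = G$$(p,p)" using submatrix_index_card[OF dG(1) dG(3), of "{p,q}" "{p,q}", unfolded cp] by simp
  have e2: "?M $$ (0,1) = G$$(p,q)" using submatrix_index_card[OF dG(1) dG(4), of "{p,q}" "{p,q}", unfolded cp cq] by simp
  have e3: "?M $$ (1,0) = G$$(q,p)" using submatrix_index_card[OF dG(2) dG(3), of "{p,q}" "{p,q}", unfolded cp cq] by simp
  have e4: "?M $$ (1,1) = G$$(q,q)" using submatrix_index_card[OF dG(2) dG(4), of "{p,q}" "{p,q}", unfolded cq] by simp
  note e = e1 e2 e3 e4
  show ?thesis using det2[OF M] e by simp
qed


lemma sum2:
  fixes n p q :: nat and f :: "nat \<Rightarrow> real"
  assumes "p < n" "q < n" "p \<noteq> q"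
  shows "(\<Sum>k\<in>{0..<n}. f k * (if k = p then u else if k = q then w else 0)) = f p * u + f q * (w::real)"
proof -
  have "(\<Sum>k\<in>{0..<n}. f k * (if k = p then u else if k = q then w else 0)) =
        (\<Sum>k\<in>{0..<n}. (if k = p then f k * u else 0) + (if k = q then f k * w else 0))"
    by (rule sum.cong) (use assms in auto)
  also have "\<dots> = (\<Sum>k\<in>{0..<n}. (if k = p then f k * u else 0)) + (\<Sum>k\<in>{0..<n}. (if k = q then f k * w else 0))"
    by (simp add: sum.distrib)
  also have "(\<Sum>k\<in>{0..<n}. (if k = p then f k * u else 0)) = f p * u" using assms(1) by (subst sum.delta) auto
  also have "(\<Sum>k\<in>{0..<n}. (if k = q then f k * w else 0)) = f q * w" using assms(2) by (subst sum.delta) auto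
  finally show ?thesis .
qed

lemma quadform:
  fixes s :: real
  assumes G: "(G::real mat) \<in> carrier_mat n n" and "p < n" "q < n" "p \<noteq> q"
  defines "v \<equiv> vec n (\<lambda>i. if i = p then 1 else if i = q then s else 0)"
  shows "v \<bullet> (G *\<^sub>v v) = G$$(p,p) + s*G$$(p,q) + s*G$$(q,p) + s^2 * G$$(q,q)"
proof -
  have Gv: "\<And>i. i < n \<Longrightarrow> (G *\<^sub>v v) $ i = G$$(i,p) + s * G$$(i,q)"
  proof -
    fix i assume i: "i < n"
    have "(G *\<^sub>v v) $ i = (\<Sum>k\<in>{0..<n}. G$$(i,k) * (if k = p then 1 else if k = q then s else 0))"
      using G i unfolding v_def by (simp add: mult_mat_vec_def scalar_prod_def row_def)
    also have "\<dots> = G$$(i,p) + s * G$$(i,q)" using sum2[OF assms(2-4)] by simp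
    finally show "(G *\<^sub>v v) $ i = G$$(i,p) + s * G$$(i,q)" .
  qed
  have "v \<bullet> (G *\<^sub>v v) = (\<Sum>i\<in>{0..<n}. (G *\<^sub>v v) $ i * (if i = p then 1 else if i = q then s else 0))"
    using G unfolding v_def by (simp add: scalar_prod_def mult.commute)
  also have "\<dots> = (\<Sum>i\<in>{0..<n}. (G$$(i,p) + s * G$$(i,q)) * (if i = p then 1 else if i = q then s else 0))"
    by (rule sum.cong) (auto simp: Gv)
  also have "\<dots> = (G$$(p,p) + s * G$$(p,q)) * 1 + (G$$(q,p) + s * G$$(q,q)) * s"
    by (rule sum2[OF assms(2-4)])
  finally show ?thesis by (simp add: algebra_simps power2_eq_square)
qed


lemma hx_hy_ne: "\<not> (hx v = 0 \<and> hy v = 0)"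
  by (cases v) (auto simp: hx_def hy_def)
lemma hx0: "hx v = 0 \<longleftrightarrow> v = Some 0"
  by (cases v) (auto simp: hx_def hy_def)
lemma hy0: "hy v = 0 \<longleftrightarrow> v = None"
  by (cases v) (auto simp: hx_def hy_def)

lemma biquad_swap: "biquad_rel A B B' E z w \<longleftrightarrow> biquad_rel A B' B E w z"
  unfolding biquad_rel_def by (simp add: algebra_simps)

lemma ae_sym:
  assumes C: "real_EPBQ_curve m \<Gamma> a b e" and jl: "j < m" "l < m" "j \<noteq> l"
  shows "a l j = a j l \<and> e l j = e j l"
proof (rule ccontr)
  assume neg: "\<not> (a l j = a j l \<and> e l j = e j l)"
  have cl: "zariski_closed m \<Gamma>" and irr: "zariski_irreducible m \<Gamma>"
    using C unfolding real_EPBQ_curve_def irreducible_real_curve_def by auto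
  have R1: "\<forall>P\<in>\<Gamma>. biquad_rel (a j l) (b j l) (b l j) (e j l) (P j) (P l)"
   and R2: "\<forall>P\<in>\<Gamma>. biquad_rel (a l j) (b l j) (b j l) (e l j) (P l) (P j)"
    using C jl unfolding real_EPBQ_curve_def by auto
  have ii: "\<not> (\<forall>P\<in>\<Gamma>. P j = Some 0)" "\<not> (\<forall>P\<in>\<Gamma>. P j = None)"
           "\<not> (\<forall>P\<in>\<Gamma>. P l = Some 0)" "\<not> (\<forall>P\<in>\<Gamma>. P l = None)"
    using C jl unfolding real_EPBQ_curve_def by auto
  have iii: "\<not> (\<exists>c::real. c \<noteq> 0 \<and> (\<forall>P\<in>\<Gamma>. hx (P j) * hx (P l) = c * hy (P j) * hy (P l)))"
    using C jl unfolding real_EPBQ_curve_def by auto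
  define \<alpha> where "\<alpha> = a j l - a l j"
  define \<epsilon> where "\<epsilon> = e j l - e l j"
  have eq: "\<forall>P\<in>\<Gamma>. \<alpha> * (hx (P j) * hx (P l))^2 + \<epsilon> * (hy (P j) * hy (P l))^2 = 0"
  proof
    fix P assume "P \<in> \<Gamma>"
    then have "biquad_rel (a j l) (b j l) (b l j) (e j l) (P j) (P l)"
              "biquad_rel (a l j) (b l j) (b j l) (e l j) (P l) (P j)" using R1 R2 by auto
    then show "\<alpha> * (hx (P j) * hx (P l))^2 + \<epsilon> * (hy (P j) * hy (P l))^2 = 0"
      unfolding biquad_rel_def \<alpha>_def \<epsilon>_def by (simp add: algebra_simps power2_eq_square)
  qed
  have splitx: False if "\<forall>P\<in>\<Gamma>. hx (P j) * hx (P l) = 0"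
  proof -
    have "(\<forall>P\<in>\<Gamma>. hpoly_eval m (wpoly j l {Some 0}) P = 0) \<or> (\<forall>P\<in>\<Gamma>. hpoly_eval m (wpoly l j {Some 0}) P = 0)"
      by (rule irr_split[OF cl irr mh_mh[OF mh_wpoly] mh_mh[OF mh_wpoly]])
         (use jl that wpoly_zero hx0 in auto)
    then show False using ii wpoly_zero jl by auto
  qed
  show False
  proof (cases "\<alpha> = 0")
    case True
    then have "\<epsilon> \<noteq> 0" using neg \<alpha>_def \<epsilon>_def by auto
    then have "\<forall>P\<in>\<Gamma>. hy (P j) * hy (P l) = 0" using eq True by auto
    then have "(\<forall>P\<in>\<Gamma>. hpoly_eval m (wpoly j l {None}) P = 0) \<or> (\<forall>P\<in>\<Gamma>. hpoly_eval m (wpoly l j {None}) P = 0)"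
      by (intro irr_split[OF cl irr mh_mh[OF mh_wpoly] mh_mh[OF mh_wpoly]])
         (use jl wpoly_zero hy0 in auto)
    then show False using ii wpoly_zero jl by auto
  next
    case False
    define k where "k = - \<epsilon> / \<alpha>"
    have sk: "\<forall>P\<in>\<Gamma>. (hx (P j) * hx (P l))^2 = k * (hy (P j) * hy (P l))^2"
    proof
      fix P assume "P \<in> \<Gamma>"
      then have "\<alpha> * (hx (P j) * hx (P l))^2 = - \<epsilon> * (hy (P j) * hy (P l))^2" using eq by auto
      then show "(hx (P j) * hx (P l))^2 = k * (hy (P j) * hy (P l))^2"
        unfolding k_def using False by (simp add: field_simps)
    qed
    show False
    proof (cases "k > 0")
      case True
      define c where "c = sqrt k"
      have c: "c > 0" "c^2 = k" using True c_def by auto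
      have "\<forall>P\<in>\<Gamma>. hpoly_eval m (ipoly j l c) P = 0 \<or> hpoly_eval m (ipoly j l (-c)) P = 0"
      proof
        fix P assume "P \<in> \<Gamma>"
        then have "(hx (P j) * hx (P l))^2 = (c * (hy (P j) * hy (P l)))^2"
          using sk c by (simp add: power_mult_distrib)
        then have "hx (P j) * hx (P l) = c * (hy (P j) * hy (P l)) \<or>
                   hx (P j) * hx (P l) = - (c * (hy (P j) * hy (P l)))"
          using power2_eq_iff by blast
        then show "hpoly_eval m (ipoly j l c) P = 0 \<or> hpoly_eval m (ipoly j l (-c)) P = 0"
          unfolding ipoly_eval[OF jl] by (auto simp: mult.assoc)
      qed
      then have "(\<forall>P\<in>\<Gamma>. hpoly_eval m (ipoly j l c) P = 0) \<or> (\<forall>P\<in>\<Gamma>. hpoly_eval m (ipoly j l (-c)) P = 0)"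
        by (rule irr_split[OF cl irr mh_mh[OF mh_ipoly[OF jl]] mh_mh[OF mh_ipoly[OF jl]]])
      then show False
      proof
        assume "\<forall>P\<in>\<Gamma>. hpoly_eval m (ipoly j l c) P = 0"
        then have "\<forall>P\<in>\<Gamma>. hx (P j) * hx (P l) = c * hy (P j) * hy (P l)" using ipoly_eval[OF jl] by simp
        moreover have "c \<noteq> 0" using c by simp
        ultimately have "\<exists>c::real. c \<noteq> 0 \<and> (\<forall>P\<in>\<Gamma>. hx (P j) * hx (P l) = c * hy (P j) * hy (P l))"
          by blast
        then show False using iii by (rule notE[rotated])
      next
        assume "\<forall>P\<in>\<Gamma>. hpoly_eval m (ipoly j l (-c)) P = 0"
        then have "\<forall>P\<in>\<Gamma>. hx (P j) * hx (P l) = (-c) * hy (P j) * hy (P l)" using ipoly_eval[OF jl] by (auto simp: eq_neg_iff_add_eq_0)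
        moreover have "-c \<noteq> 0" using c by simp
        ultimately have "\<exists>c::real. c \<noteq> 0 \<and> (\<forall>P\<in>\<Gamma>. hx (P j) * hx (P l) = c * hy (P j) * hy (P l))"
          by blast
        then show False using iii by (rule notE[rotated])
      qed
    next
      case False
      have "\<forall>P\<in>\<Gamma>. hx (P j) * hx (P l) = 0"
      proof
        fix P assume "P \<in> \<Gamma>"
        then have h: "(hx (P j) * hx (P l))^2 = k * (hy (P j) * hy (P l))^2" using sk by auto
        have "k * (hy (P j) * hy (P l))^2 \<le> 0" using False by (simp add: mult_nonpos_nonneg)
        then have "(hx (P j) * hx (P l))^2 = 0" using h zero_le_power2[of "hx (P j) * hx (P l)"] by linarith
        then show "hx (P j) * hx (P l) = 0" by simp
      qed
      then show False using splitx by blast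
    qed
  qed
qed



theorem mainTheorem8:
  fixes m :: nat and \<Gamma> :: "(nat \<Rightarrow> real option) set"
    and a b e :: "nat \<Rightarrow> nat \<Rightarrow> real" and j l :: nat
  assumes "real_EPBQ_curve m \<Gamma> a b e"
    and "realisable m a b e"
    and "j < m" and "l < m" and "j \<noteq> l"
  shows "(1 - a j l * e j l - b j l * b l j) ^ 2 - 4 * a j l * b j l * b l j * e j l > 0"
proof (rule ccontr)
  assume "\<not> ?thesis"
  then have D: "(1 - a j l * e j l - b j l * b l j) ^ 2 - 4 * a j l * b j l * b l j * e j l \<le> 0" by simp
  have jl: "j < m" "l < m" "j \<noteq> l" using assms by auto
  have lj: "l < m" "j < m" "l \<noteq> j" using assms by auto
  note C = assms(1)
  have cl: "zariski_closed m \<Gamma>" and irr: "zariski_irreducible m \<Gamma>"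
    using C unfolding real_EPBQ_curve_def irreducible_real_curve_def by auto
  have R1: "\<forall>P\<in>\<Gamma>. biquad_rel (a j l) (b j l) (b l j) (e j l) (P j) (P l)"
    using C jl unfolding real_EPBQ_curve_def by auto
  have ii: "\<not> (\<forall>P\<in>\<Gamma>. P j = Some 0)" "\<not> (\<forall>P\<in>\<Gamma>. P j = None)"
           "\<not> (\<forall>P\<in>\<Gamma>. P l = Some 0)" "\<not> (\<forall>P\<in>\<Gamma>. P l = None)"
    using C jl unfolding real_EPBQ_curve_def by auto
  have C4: "\<forall>j<m. \<forall>l<m. j \<noteq> l \<longrightarrow>
        \<not> (\<exists>c::real. c \<noteq> 0 \<and> (\<forall>P\<in>\<Gamma>. hx (P j) * hy (P l) = c * hy (P j) * hx (P l))) \<and>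
        \<not> (\<exists>c::real. c \<noteq> 0 \<and> (\<forall>P\<in>\<Gamma>. hx (P j) * hx (P l) = c * hy (P j) * hy (P l)))"
    using C unfolding real_EPBQ_curve_def by blast
  have iii: "\<not> (\<exists>c::real. c \<noteq> 0 \<and> (\<forall>P\<in>\<Gamma>. hx (P j) * hy (P l) = c * hy (P j) * hx (P l)))"
    using C4[rule_format, OF jl] by (rule conjunct1)
  have sym: "a l j = a j l" "e l j = e j l" using ae_sym[OF C jl] by auto
  from assms(2) obtain n J lam g where
    n3: "3 \<le> n" and Jm: "\<forall>p<n. J p < m" and Jsurj: "\<forall>j<m. \<exists>p<n. J p = j"
    and lam0: "\<forall>p<n. lam p \<noteq> 0"
    and cond: "let G = Gmat n J lam g a b e; H = Hmat n J lam g b e in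
           condition_S n G H \<or> condition_E n G H \<or> condition_L n G H"
    unfolding realisable_def by blast
  obtain p where p: "p < n" "J p = j" using Jsurj jl by blast
  obtain q where q: "q < n" "J q = l" using Jsurj jl by blast
  have pq: "p \<noteq> q" using p q jl by auto
  define G where "G = Gmat n J lam g a b e"
  define H where "H = Hmat n J lam g b e"
  have cond': "condition_S n G H \<or> condition_E n G H \<or> condition_L n G H"
    using cond unfolding G_def H_def Let_def .
  have Gc: "G \<in> carrier_mat n n" unfolding G_def Gmat_def by simp
  define x where "x = lam p"
  define y where "y = lam q"
  have x: "x \<noteq> 0" and y: "y \<noteq> 0" using lam0 p q x_def y_def by auto
  define gv where "gv = (1/2) * (- a j l / (x * y) + y * b j l / x + x * b l j / y - x * y * e j l)"
  have Gpq: "G $$ (p,q) = gv" unfolding G_def Gmat_def gv_def x_def y_def using p q pq jl by simp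
  have Gqp: "G $$ (q,p) = gv" unfolding G_def Gmat_def gv_def x_def y_def using p q pq jl sym
    by (simp add: algebra_simps)
  have Gpp: "G $$ (p,p) = 1" and Gqq: "G $$ (q,q) = 1" unfolding G_def Gmat_def using p q by simp_all
  have g1: "gv^2 < 1"
  proof -
    have "condition_S n G H \<or> principal_minors_pos n G"
      using cond' unfolding condition_E_def condition_L_def by blast
    then show ?thesis
    proof
      assume "condition_S n G H"
      then have pd: "positive_definite_mat n G" unfolding condition_S_def .
      have qf: "0 < 2 + 2 * s * gv" if "s^2 = 1" for s :: real
      proof -
        define v where "v = vec n (\<lambda>i. if i = p then 1 else if i = q then s else (0::real))"
        have vc: "v \<in> carrier_vec n" unfolding v_def by simp
        have vnz: "v \<noteq> 0\<^sub>v n"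
        proof
          assume "v = 0\<^sub>v n"
          then have "v $ p = 0" using p by simp
          then show False unfolding v_def using p by simp
        qed
        have "0 < v \<bullet> (G *\<^sub>v v)" using pd vc vnz unfolding positive_definite_mat_def by blast
        also have "v \<bullet> (G *\<^sub>v v) = 2 + 2 * s * gv"
          unfolding v_def quadform[OF Gc p(1) q(1) pq] Gpq Gqp Gpp Gqq using that by simp
        finally show "0 < 2 + 2 * s * gv" .
      qed
      have "0 < 2 + 2 * gv" using qf[of 1] by simp
      moreover have "0 < 2 - 2 * gv" using qf[of "-1"] by simp
      ultimately have "\<bar>gv\<bar> < 1" by linarith
      then have "\<bar>gv\<bar>^2 < 1^2" by (intro power_strict_mono) auto
      then show ?thesis by simp
    next
      assume pm: "principal_minors_pos n G"
      have card: "card {p,q} = 2" using pq by simp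
      have "det (submatrix G {p,q} {p,q}) > 0"
        using pm p q n3 card unfolding principal_minors_pos_def by auto
      moreover have "det (submatrix G {p,q} {p,q}) = 1 - gv^2"
      proof (cases "p < q")
        case True
        then show ?thesis using minor2[OF Gc True q(1)] Gpq Gqp Gpp Gqq by (simp add: power2_eq_square)
      next
        case False
        then have "q < p" using pq by simp
        then show ?thesis using minor2[OF Gc \<open>q < p\<close> p(1)] Gpq Gqp Gpp Gqq
          by (simp add: power2_eq_square insert_commute)
      qed
      ultimately show ?thesis by simp
    qed
  qed
  have ag: "\<bar>gv\<bar> < 1"
  proof -
    have "\<bar>gv\<bar>^2 < 1^2" using g1 by simp
    then show ?thesis using power_less_imp_less_base by fastforce
  qed
  have key: "-a j l + b j l * y^2 + b l j * x^2 - e j l * x^2 * y^2 = 2 * gv * (x * y)"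
    unfolding gv_def using x y by (simp add: field_simps power2_eq_square)
  have ineq: "\<bar>-a j l + b j l * y^2 + b l j * x^2 - e j l * x^2 * y^2\<bar> < 2 * \<bar>x * y\<bar>"
  proof -
    have "\<bar>2 * gv * (x * y)\<bar> = 2 * \<bar>gv\<bar> * \<bar>x * y\<bar>" by (simp add: abs_mult)
    also have "\<dots> < 2 * 1 * \<bar>x * y\<bar>" using ag x y by simp
    finally show ?thesis unfolding key by simp
  qed
  have finW: "finite {wv. \<exists>zv. biquad_rel (a j l) (b j l) (b l j) (e j l) zv wv}"
    by (rule core_finite[OF D x y ineq])
  have D': "(1 - a j l * e j l - b l j * b j l) ^ 2 - 4 * a j l * b l j * b j l * e j l \<le> 0"
    using D by (simp add: algebra_simps)
  have ineq': "\<bar>-a j l + b l j * x^2 + b j l * y^2 - e j l * y^2 * x^2\<bar> < 2 * \<bar>y * x\<bar>"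
    using ineq by (simp add: algebra_simps)
  have finZ0: "finite {wv. \<exists>zv. biquad_rel (a j l) (b l j) (b j l) (e j l) zv wv}"
    by (rule core_finite[OF D' y x ineq'])
  have finZ: "finite {zv. \<exists>wv. biquad_rel (a j l) (b j l) (b l j) (e j l) zv wv}"
    using finZ0 by (simp add: biquad_swap[of _ "b j l" "b l j"])
  have "\<exists>w0. \<forall>P\<in>\<Gamma>. P l = w0"
    by (rule const_coord[OF cl irr lj finW]) (use R1 in blast)
  then obtain w0 where w0: "\<forall>P\<in>\<Gamma>. P l = w0" by blast
  have "\<exists>z0. \<forall>P\<in>\<Gamma>. P j = z0"
    by (rule const_coord[OF cl irr jl finZ]) (use R1 in blast)
  then obtain z0 where z0: "\<forall>P\<in>\<Gamma>. P j = z0" by blast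
  obtain P0 where P0: "P0 \<in> \<Gamma>" using ii(1) by blast
  have "z0 \<noteq> Some 0"
  proof assume "z0 = Some 0" with z0 ii(1) show False by simp qed
  have "z0 \<noteq> None"
  proof assume "z0 = None" with z0 ii(2) show False by simp qed
  then obtain c1 where c1: "z0 = Some c1" "c1 \<noteq> 0" using \<open>z0 \<noteq> Some 0\<close> by (cases z0) auto
  have "w0 \<noteq> Some 0"
  proof assume "w0 = Some 0" with w0 ii(3) show False by simp qed
  have "w0 \<noteq> None"
  proof assume "w0 = None" with w0 ii(4) show False by simp qed
  then obtain c2 where c2: "w0 = Some c2" "c2 \<noteq> 0" using \<open>w0 \<noteq> Some 0\<close> by (cases w0) auto
  have "\<forall>P\<in>\<Gamma>. hx (P j) * hy (P l) = (c1/c2) * hy (P j) * hx (P l)"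
  proof
    fix P assume "P \<in> \<Gamma>"
    then have "P j = Some c1" "P l = Some c2" using z0 w0 c1 c2 by auto
    then show "hx (P j) * hy (P l) = (c1/c2) * hy (P j) * hx (P l)" using c2 by (simp add: hx_def hy_def)
  qed
  moreover have "c1/c2 \<noteq> 0" using c1 c2 by simp
  ultimately show False using iii by blast
qed


end
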